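(* Let $F\subset\mathbb{R}^N$ be a self-similar fractal, i.e. the attractor (nonempty compact set with $F=\bigcup_{i=1}^m w_i(F)$) of a finite family of contracting similarities $w_1,\dots,w_m$ of $\mathbb{R}^N$. Let $w$ be one of the $w_i$ and let $x$ be its fixed point, $x=wx$. Then the tangent cone $\mathcal{T}_xF$ consists exactly of all dilations of $Z=\overline{\bigcup_{n\in\mathbb{N}}w^{-n}F}$, i.e. of the pointed metric spaces $(Z,x,c\,d)$, $c>0$, where $d$ is the Euclidean metric.
   Context: For a metric space $(X,d)$, $x\in X$ and $t>0$, $(X,x,td)$ denotes $X$ with metric $td$ and base point $x$. A tangent set of $X$ at $x$ is any limit point, as $t\to\infty$, of $(X,x,td)$ in the pointed Gromov–Hausdorff topology (on isometry classes of pointed proper metric spaces); the tangent cone $\mathcal{T}_xX$ is the family of all tangent sets of $X$ at $x$. *)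

theory Defs
  imports "HOL-Analysis.Analysis"
begin

definition proper_metric :: "'a set \<Rightarrow> ('a \<Rightarrow> 'a \<Rightarrow> real) \<Rightarrow> bool" where
  "proper_metric M d \<longleftrightarrow> Metric_space M d \<and>
     (\<forall>x\<in>M. \<forall>r. compactin (Metric_space.mtopology M d) (Metric_space.mcball M d x r))"

definition cball_in :: "'a set \<Rightarrow> ('a \<Rightarrow> 'a \<Rightarrow> real) \<Rightarrow> 'a \<Rightarrow> real \<Rightarrow> 'a set" where
  "cball_in M d p r = {q \<in> M. d p q \<le> r}"

text \<open>Pointed Gromov--Hausdorff convergence (Burago--Burago--Ivanov, Def. 8.1.1):
  for all r, eps > 0, eventually there is a map f from the closed r-ball about p_n into Y
  with f(p_n) = y, distortion < eps, and whose image is eps-dense in the (r - eps)-ball about y.\<close>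
definition pGH_conv ::
  "(nat \<Rightarrow> 'a set) \<Rightarrow> (nat \<Rightarrow> 'a \<Rightarrow> 'a \<Rightarrow> real) \<Rightarrow> (nat \<Rightarrow> 'a)
     \<Rightarrow> 'b set \<Rightarrow> ('b \<Rightarrow> 'b \<Rightarrow> real) \<Rightarrow> 'b \<Rightarrow> bool" where
  "pGH_conv Xs ds ps Y dY y \<longleftrightarrow>
     (\<forall>r>0. \<forall>\<epsilon>>0. \<exists>n0. \<forall>n\<ge>n0. \<exists>f.
        f ` cball_in (Xs n) (ds n) (ps n) r \<subseteq> Y \<and>
        f (ps n) = y \<and>
        (\<forall>a\<in>cball_in (Xs n) (ds n) (ps n) r. \<forall>b\<in>cball_in (Xs n) (ds n) (ps n) r.
            \<bar>dY (f a) (f b) - ds n a b\<bar> < \<epsilon>) \<and>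
        (\<forall>q\<in>cball_in Y dY y (r - \<epsilon>).
            \<exists>a\<in>cball_in (Xs n) (ds n) (ps n) r. dY q (f a) < \<epsilon>))"

text \<open>(Y, dY, y) is a tangent set of (X, d) at x: a limit point of (X, x, t d) as t \<rightarrow> \<infinity>,
  i.e. the pointed GH limit of (X, x, t_k d) for some sequence t_k \<rightarrow> \<infinity>.\<close>
definition tangent_set ::
  "'a set \<Rightarrow> ('a \<Rightarrow> 'a \<Rightarrow> real) \<Rightarrow> 'a \<Rightarrow> 'b set \<Rightarrow> ('b \<Rightarrow> 'b \<Rightarrow> real) \<Rightarrow> 'b \<Rightarrow> bool" where
  "tangent_set X d x Y dY y \<longleftrightarrow>
     (\<exists>t :: nat \<Rightarrow> real. (\<forall>k. t k > 0) \<and> filterlim t at_top sequentially \<and>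
        pGH_conv (\<lambda>k. X) (\<lambda>k a b. t k * d a b) (\<lambda>k. x) Y dY y)"

definition pointed_isometric ::
  "'a set \<Rightarrow> ('a \<Rightarrow> 'a \<Rightarrow> real) \<Rightarrow> 'a \<Rightarrow> 'b set \<Rightarrow> ('b \<Rightarrow> 'b \<Rightarrow> real) \<Rightarrow> 'b \<Rightarrow> bool" where
  "pointed_isometric X dX p Y dY q \<longleftrightarrow>
     (\<exists>f. bij_betw f X Y \<and> f p = q \<and> (\<forall>a\<in>X. \<forall>b\<in>X. dY (f a) (f b) = dX a b))"

definition contracting_similarity :: "('a::euclidean_space \<Rightarrow> 'a) \<Rightarrow> bool" where
  "contracting_similarity w \<longleftrightarrow>
     (\<exists>r. 0 < r \<and> r < 1 \<and> (\<forall>a b. dist (w a) (w b) = r * dist a b))"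

end

theory Submission
  imports Defs
begin


lemma compact_space_cluster:
  assumes "compact_space T" "\<And>k. s k \<in> topspace T"
  shows "\<exists>z\<in>topspace T. \<forall>U. openin T U \<and> z \<in> U \<longrightarrow> (\<exists>\<^sub>F k in sequentially. s k \<in> U)"
proof (rule ccontr)
  assume "\<not> ?thesis"
  then have "\<forall>z\<in>topspace T. \<exists>U. openin T U \<and> z \<in> U \<and> (\<forall>\<^sub>F k in sequentially. s k \<notin> U)"
    by (auto simp: not_frequently)
  then obtain U where U: "\<And>z. z \<in> topspace T \<Longrightarrow> openin T (U z) \<and> z \<in> U z \<and> (\<forall>\<^sub>F k in sequentially. s k \<notin> U z)"
    by metis
  from assms(1) have "compactin T (topspace T)" by (simp add: compact_space_def)
  moreover have "\<forall>u\<in>U ` topspace T. openin T u" using U by blast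
  moreover have "topspace T \<subseteq> \<Union>(U ` topspace T)" using U by blast
  ultimately obtain C where C: "finite C" "C \<subseteq> U ` topspace T" "topspace T \<subseteq> \<Union>C"
    unfolding compactin_def by meson
  then obtain D where D: "finite D" "D \<subseteq> topspace T" "C = U ` D"
    by (meson finite_subset_image)
  have "\<forall>\<^sub>F k in sequentially. \<forall>z\<in>D. s k \<notin> U z"
    using D(1,2) U by (simp add: eventually_ball_finite subset_iff)
  then obtain k where "\<forall>z\<in>D. s k \<notin> U z"
    using eventually_sequentially by auto
  with assms(2)[of k] C(3) D(3) show False by blast
qed

lemma zero_if_small:
  fixes X :: real
  assumes "\<And>\<delta>. \<delta> > 0 \<Longrightarrow> \<bar>X\<bar> < \<delta>"
  shows "X = 0"
  by (metis abs_ge_zero abs_le_zero_iff assms less_irrefl not_less_iff_gr_or_eq zero_less_abs_iff)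

lemma big_k:
  fixes B \<delta> :: real
  assumes "\<delta> > 0"
  shows "\<exists>N. \<forall>k\<ge>N. B \<le> real k \<and> 1 / (real k + 1) < \<delta>"
proof -
  obtain N1 :: nat where N1: "B \<le> real N1" using real_arch_simple by blast
  obtain N2 :: nat where N2: "1 / \<delta> < real N2" using reals_Archimedean2 by blast
  show ?thesis
  proof (intro exI[of _ "max N1 N2"] allI impI conjI)
    fix k assume k: "max N1 N2 \<le> k"
    then show "B \<le> real k" using N1 by linarith
    have "1 / \<delta> < real k + 1" using N2 k by linarith
    then show "1 / (real k + 1) < \<delta>" using assms
      by (smt (verit, best) divide_less_eq mult.commute of_nat_0_le_iff zero_less_divide_1_iff)
  qed
qed



lemma uniq:
  fixes Z :: "'a::euclidean_space set" and Y :: "'b set"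
  assumes Zc: "closed Z" and pZ: "p \<in> Z" and c0: "c > 0" and PY: "proper_metric Y dY" and qY: "q \<in> Y"
  and H: "\<And>R \<epsilon>. R > 0 \<Longrightarrow> \<epsilon> > 0 \<Longrightarrow> \<exists>f. (\<forall>a\<in>Z. c*dist p a \<le> R \<longrightarrow> f a \<in> Y) \<and> f p = q \<and>
     (\<forall>a\<in>Z. \<forall>b\<in>Z. c*dist p a \<le> R \<longrightarrow> c*dist p b \<le> R \<longrightarrow> \<bar>dY (f a) (f b) - c*dist a b\<bar> < \<epsilon>) \<and>
     (\<forall>b\<in>Y. dY q b \<le> R - \<epsilon> \<longrightarrow> (\<exists>a\<in>Z. c*dist p a \<le> R \<and> dY b (f a) < \<epsilon>))"
  shows "pointed_isometric Z (\<lambda>a b. c*dist a b) p Y dY q"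
proof -
  interpret Y: Metric_space Y dY using PY by (simp add: proper_metric_def)
  have Ycomp: "\<And>z r. z \<in> Y \<Longrightarrow> compactin Y.mtopology (Y.mcball z r)"
    using PY by (simp add: proper_metric_def)
  define R :: "nat \<Rightarrow> real" where "R k = real k + 1" for k
  define e :: "nat \<Rightarrow> real" where "e k = 1 / (real k + 1)" for k
  have e0: "0 < e k" "e k \<le> 1" for k by (auto simp: e_def)
  have R0: "0 < R k" for k by (simp add: R_def)
  have "\<forall>k. \<exists>f. (\<forall>a\<in>Z. c*dist p a \<le> R k \<longrightarrow> f a \<in> Y) \<and> f p = q \<and>
     (\<forall>a\<in>Z. \<forall>b\<in>Z. c*dist p a \<le> R k \<longrightarrow> c*dist p b \<le> R k \<longrightarrow> \<bar>dY (f a) (f b) - c*dist a b\<bar> < e k) \<and>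
     (\<forall>b\<in>Y. dY q b \<le> R k - e k \<longrightarrow> (\<exists>a\<in>Z. c*dist p a \<le> R k \<and> dY b (f a) < e k))"
    using H R0 e0 by blast
  then obtain ff where ff: "\<And>k. (\<forall>a\<in>Z. c*dist p a \<le> R k \<longrightarrow> ff k a \<in> Y) \<and> ff k p = q \<and>
     (\<forall>a\<in>Z. \<forall>b\<in>Z. c*dist p a \<le> R k \<longrightarrow> c*dist p b \<le> R k \<longrightarrow> \<bar>dY (ff k a) (ff k b) - c*dist a b\<bar> < e k) \<and>
     (\<forall>b\<in>Y. dY q b \<le> R k - e k \<longrightarrow> (\<exists>a\<in>Z. c*dist p a \<le> R k \<and> dY b (ff k a) < e k))"
    by metis
  define f where "f k a = (if a \<in> Z \<and> c*dist p a \<le> R k then ff k a else q)" for k a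
  have fY: "f k a \<in> Y" for k a using ff qY by (simp add: f_def)
  have fp: "f k p = q" for k using ff pZ R0[of k] by (simp add: f_def less_imp_le)
  have fdist: "\<bar>dY (f k a) (f k b) - c*dist a b\<bar> < e k"
    if "a \<in> Z" "b \<in> Z" "c*dist p a \<le> R k" "c*dist p b \<le> R k" for k a b
    using ff[of k] that by (simp add: f_def)
  define g where "g k b = (if b \<in> Y \<and> dY q b \<le> R k - e k
       then (SOME a. a \<in> Z \<and> c*dist p a \<le> R k \<and> dY b (f k a) < e k) else p)" for k b
  have grange: "g k b \<in> Z \<and> c*dist p (g k b) \<le> R k \<and> dY b (f k (g k b)) < e k"
    if hb: "b \<in> Y" "dY q b \<le> R k - e k" for k b
  proof -
    have "\<exists>a\<in>Z. c*dist p a \<le> R k \<and> dY b (ff k a) < e k"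
      using conjunct2[OF conjunct2[OF conjunct2[OF ff[of k]]]] hb by blast
    then obtain a where "a\<in>Z" "c*dist p a \<le> R k" "dY b (ff k a) < e k" by blast
    then have "\<exists>a. a \<in> Z \<and> c*dist p a \<le> R k \<and> dY b (f k a) < e k" by (auto simp: f_def)
    then have "(SOME a. a \<in> Z \<and> c*dist p a \<le> R k \<and> dY b (f k a) < e k) \<in> Z \<and>
       c*dist p (SOME a. a \<in> Z \<and> c*dist p a \<le> R k \<and> dY b (f k a) < e k) \<le> R k \<and>
       dY b (f k (SOME a. a \<in> Z \<and> c*dist p a \<le> R k \<and> dY b (f k a) < e k)) < e k"
      by (rule someI_ex)
    then show ?thesis unfolding g_def using hb by simp
  qed
  have fbound: "dY q (f k a) \<le> c*dist p a + 1" if "a \<in> Z" for k a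
  proof (cases "c*dist p a \<le> R k")
    case True
    then have "\<bar>dY (f k p) (f k a) - c*dist p a\<bar> < e k"
      using fdist[of p a k] pZ that R0[of k] by simp
    then show ?thesis using fp e0[of k] by simp
  next
    case False then show ?thesis using qY c0 by (simp add: f_def)
  qed
  have gbound: "g k b \<in> Z \<and> c*dist p (g k b) \<le> dY q b + 2" if "b \<in> Y" for k b
  proof (cases "dY q b \<le> R k - e k")
    case True
    note G = grange[OF that True]
    then have "\<bar>dY (f k p) (f k (g k b)) - c*dist p (g k b)\<bar> < e k"
      using fdist[of p "g k b" k] pZ R0[of k] by simp
    moreover have "dY q (f k (g k b)) \<le> dY q b + dY b (f k (g k b))"
      using Y.triangle[OF qY that fY] .
    ultimately have "c*dist p (g k b) < dY q b + 2 * e k"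
      using G unfolding fp abs_less_iff by linarith
    then show ?thesis using G e0[of k] by linarith
  next
    case False then show ?thesis using pZ that Y.nonneg[of q b] by (simp add: g_def)
  qed
  have divb: "c*u \<le> v \<Longrightarrow> u \<le> v/c" for u v using c0 by (simp add: pos_le_divide_eq mult.commute)
  define TF where "TF = product_topology (\<lambda>a. subtopology Y.mtopology (Y.mcball q (c*dist p a + 1))) Z"
  define TG where "TG = product_topology (\<lambda>b. subtopology (euclidean::'a topology) (Z \<inter> cball p ((dY q b + 2)/c))) Y"
  define T where "T = prod_topology TF TG"
  define s where "s k = (restrict (f k) Z, restrict (g k) Y)" for k
  have topT: "topspace T = (PiE Z (\<lambda>a. Y \<inter> Y.mcball q (c*dist p a + 1))) \<times> (PiE Y (\<lambda>b. Z \<inter> cball p ((dY q b + 2)/c)))"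
    by (simp add: T_def TF_def TG_def topspace_product_topology)
  have sT: "s k \<in> topspace T" for k
  proof -
    have "restrict (f k) Z \<in> PiE Z (\<lambda>a. Y \<inter> Y.mcball q (c*dist p a + 1))"
      unfolding restrict_PiE_iff using fY fbound qY by simp
    moreover have "restrict (g k) Y \<in> PiE Y (\<lambda>b. Z \<inter> cball p ((dY q b + 2)/c))"
      unfolding restrict_PiE_iff using gbound divb by (simp add: dist_commute)
    ultimately show ?thesis by (simp add: topT s_def)
  qed
  have cT: "compact_space T"
  proof -
    have "compact_space TF" unfolding TF_def
      by (simp add: compact_space_product_topology compact_space_subtopology Ycomp qY)
    moreover have "compact_space TG" unfolding TG_def
      by (simp add: compact_space_product_topology compact_space_subtopology closed_Int_compact Zc)
    ultimately show ?thesis by (simp add: T_def compact_space_prod_topology)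
  qed
  obtain FG where FG0: "FG \<in> topspace T" and FG2: "\<forall>U. openin T U \<and> FG \<in> U \<longrightarrow> (\<exists>\<^sub>F k in sequentially. s k \<in> U)"
  proof -
    have "\<exists>z\<in>topspace T. \<forall>U. openin T U \<and> z \<in> U \<longrightarrow> (\<exists>\<^sub>F k in sequentially. s k \<in> U)"
      by (rule compact_space_cluster[OF cT]) (rule sT)
    then show ?thesis using that by blast
  qed
  have FG: "FG \<in> topspace T" "\<And>U. openin T U \<Longrightarrow> FG \<in> U \<Longrightarrow> (\<exists>\<^sub>F k in sequentially. s k \<in> U)"
    using FG0 FG2 by auto
  define FF where "FF = fst FG"
  define GG where "GG = snd FG"
  have FG1: "FF \<in> PiE Z (\<lambda>a. Y \<inter> Y.mcball q (c*dist p a + 1))" "GG \<in> PiE Y (\<lambda>b. Z \<inter> cball p ((dY q b + 2)/c))"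
    using FG(1) unfolding topT FF_def GG_def mem_Times_iff by simp_all
  have FFY: "FF a \<in> Y" if "a \<in> Z" for a using PiE_mem[OF FG1(1) that] by simp
  have GGZ: "GG b \<in> Z \<and> c * dist p (GG b) \<le> dY q b + 2" if "b \<in> Y" for b
  proof -
    have "GG b \<in> Z \<inter> cball p ((dY q b + 2)/c)" using PiE_mem[OF FG1(2) that] .
    then show ?thesis using c0 by (simp add: pos_le_divide_eq mult.commute)
  qed
  have approx: "\<exists>k\<ge>N. dY (FF a1) (f k a1) < \<delta> \<and> dY (FF a2) (f k a2) < \<delta> \<and> dist (GG b) (g k b) < \<delta>"
    if "a1 \<in> Z" "a2 \<in> Z" "b \<in> Y" "\<delta> > 0" for a1 a2 b \<delta> N
  proof -
    have cF: "continuous_map T Y.mtopology (\<lambda>z. fst z a)" if "a \<in> Z" for a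
    proof -
      have "continuous_map TF (subtopology Y.mtopology (Y.mcball q (c*dist p a + 1))) (\<lambda>h. h a)"
        unfolding TF_def using that by (rule continuous_map_product_projection)
      hence "continuous_map TF Y.mtopology (\<lambda>h. h a)" by (rule continuous_map_into_fulltopology)
      hence "continuous_map T Y.mtopology ((\<lambda>h. h a) \<circ> fst)"
        unfolding T_def by (rule continuous_map_compose[OF continuous_map_fst])
      thus ?thesis by (simp add: o_def)
    qed
    have cG: "continuous_map T euclidean (\<lambda>z. snd z b)"
    proof -
      have "continuous_map TG (subtopology euclidean (Z \<inter> cball p ((dY q b + 2)/c))) (\<lambda>h. h b)"
        unfolding TG_def by (rule continuous_map_product_projection[OF that(3)])
      hence "continuous_map TG euclidean (\<lambda>h. h b)" by (rule continuous_map_into_fulltopology)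
      hence "continuous_map T euclidean ((\<lambda>h. h b) \<circ> snd)"
        unfolding T_def by (rule continuous_map_compose[OF continuous_map_snd])
      thus ?thesis by (simp add: o_def)
    qed
    define U where "U = {z \<in> topspace T. fst z a1 \<in> Y.mball (FF a1) \<delta>} \<inter> {z \<in> topspace T. fst z a2 \<in> Y.mball (FF a2) \<delta>}
        \<inter> {z \<in> topspace T. snd z b \<in> ball (GG b) \<delta>}"
    have o1: "openin T {z \<in> topspace T. fst z a1 \<in> Y.mball (FF a1) \<delta>}"
      by (rule openin_continuous_map_preimage[OF cF[OF that(1)] Y.openin_mball])
    have o2: "openin T {z \<in> topspace T. fst z a2 \<in> Y.mball (FF a2) \<delta>}"
      by (rule openin_continuous_map_preimage[OF cF[OF that(2)] Y.openin_mball])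
    have ob: "openin euclidean (ball (GG b) \<delta>)" using open_ball open_openin by blast
    have o3: "openin T {z \<in> topspace T. snd z b \<in> ball (GG b) \<delta>}"
      by (rule openin_continuous_map_preimage[OF cG ob])
    have "openin T U" unfolding U_def by (intro openin_Int o1 o2 o3)
    have m1: "FF a1 \<in> Y.mball (FF a1) \<delta>" using FFY[OF that(1)] that(4) by simp
    have m2: "FF a2 \<in> Y.mball (FF a2) \<delta>" using FFY[OF that(2)] that(4) by simp
    have m3: "GG b \<in> ball (GG b) \<delta>" using that(4) by simp
    have "FG \<in> U" unfolding U_def using FG(1) m1 m2 m3 unfolding FF_def GG_def by blast
    with \<open>openin T U\<close> have "\<exists>\<^sub>F k in sequentially. s k \<in> U" by (rule FG(2))
    moreover have "\<forall>\<^sub>F k in sequentially. k \<ge> N" by (rule eventually_ge_at_top)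
    ultimately have "\<exists>\<^sub>F k in sequentially. s k \<in> U \<and> k \<ge> N" by (rule frequently_eventually_frequently)
    then have "\<exists>k. s k \<in> U \<and> k \<ge> N" by (rule frequently_ex)
    then obtain k where "s k \<in> U" "k \<ge> N" by blast
    then have "fst (s k) a1 \<in> Y.mball (FF a1) \<delta>" "fst (s k) a2 \<in> Y.mball (FF a2) \<delta>"
      "snd (s k) b \<in> ball (GG b) \<delta>" unfolding U_def by blast+
    moreover have "fst (s k) a1 = f k a1" "fst (s k) a2 = f k a2" "snd (s k) b = g k b"
      using that(1-3) by (simp_all add: s_def)
    ultimately have "dY (FF a1) (f k a1) < \<delta>" "dY (FF a2) (f k a2) < \<delta>" "dist (GG b) (g k b) < \<delta>"
      by simp_all
    then show ?thesis using \<open>k \<ge> N\<close> by blast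
  qed
  have Rk: "real k \<le> R k - e k" "R k - e k \<le> R k" for k using e0[of k] by (simp_all add: R_def)
  have FFp: "FF p = q"
  proof -
    have "\<bar>dY (FF p) q\<bar> < \<delta>" if d0: "\<delta> > 0" for \<delta>
    proof -
      obtain k where "dY (FF p) (f k p) < \<delta>" using approx[OF pZ pZ qY d0, of 0] by blast
      then show ?thesis using fp by simp
    qed
    then have "dY (FF p) q = 0" by (rule zero_if_small)
    then show ?thesis using FFY[OF pZ] qY by simp
  qed
  have FFiso: "dY (FF a1) (FF a2) = c * dist a1 a2" if a12: "a1 \<in> Z" "a2 \<in> Z" for a1 a2
  proof -
    have "\<bar>dY (FF a1) (FF a2) - c*dist a1 a2\<bar> < \<delta>" if d0: "\<delta> > 0" for \<delta>
    proof -
      obtain N where N: "\<forall>k\<ge>N. max (c*dist p a1) (c*dist p a2) \<le> real k \<and> 1/(real k+1) < \<delta>/3"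
        using big_k[of "\<delta>/3" "max (c*dist p a1) (c*dist p a2)"] d0 by auto
      obtain k where k: "k \<ge> N" "dY (FF a1) (f k a1) < \<delta>/3" "dY (FF a2) (f k a2) < \<delta>/3"
        using approx[OF a12 qY, of "\<delta>/3" N] d0 by auto
      have Nk: "c*dist p a1 \<le> real k" "c*dist p a2 \<le> real k" "1/(real k+1) < \<delta>/3" using N k(1) by auto
      have kk: "c*dist p a1 \<le> R k" "c*dist p a2 \<le> R k" "e k < \<delta>/3"
        using Nk Rk[of k] e0[of k] unfolding e_def by linarith+
      have fd: "\<bar>dY (f k a1) (f k a2) - c*dist a1 a2\<bar> < e k" using fdist[OF a12 kk(1,2)] .
      have t1: "dY (FF a1) (FF a2) \<le> dY (FF a1) (f k a1) + dY (f k a1) (f k a2) + dY (f k a2) (FF a2)"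
        using Y.triangle FFY a12 fY by (meson add_mono order_trans order_refl)
      have t2: "dY (f k a1) (f k a2) \<le> dY (FF a1) (f k a1) + dY (FF a1) (FF a2) + dY (FF a2) (f k a2)"
        using Y.triangle Y.commute FFY a12 fY by (smt (verit))
      have "dY (f k a2) (FF a2) = dY (FF a2) (f k a2)" using Y.commute .
      then show ?thesis using t1 t2 fd kk(3) k(2,3) unfolding abs_less_iff by linarith
    qed
    then show ?thesis using zero_if_small by force
  qed
  have FG_id: "FF (GG b) = b" if bY: "b \<in> Y" for b
  proof -
    note GB = GGZ[OF bY]
    have "\<bar>dY (FF (GG b)) b\<bar> < \<delta>" if d0: "\<delta> > 0" for \<delta>
    proof -
      define \<delta>' where "\<delta>' = \<delta> / (c+3)"
      have d'0: "\<delta>' > 0" and d'e: "(c+3) * \<delta>' = \<delta>" using d0 c0 by (auto simp: \<delta>'_def)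
      obtain N where N: "\<forall>k\<ge>N. dY q b + 2 \<le> real k \<and> 1/(real k+1) < \<delta>'"
        using big_k[of "\<delta>'" "dY q b + 2", OF d'0] by auto
      obtain k where k: "k \<ge> N" "dY (FF (GG b)) (f k (GG b)) < \<delta>'" "dist (GG b) (g k b) < \<delta>'"
        using approx[OF conjunct1[OF GB] conjunct1[OF GB] bY d'0, of N] by auto
      have Nk: "dY q b + 2 \<le> real k" "1/(real k+1) < \<delta>'" using N k(1) by auto
      have kk: "dY q b \<le> R k - e k" "c*dist p (GG b) \<le> R k" "e k < \<delta>'"
        using Nk Rk[of k] e0[of k] GB unfolding e_def by linarith+
      note G = grange[OF bY kk(1)]
      have fd: "\<bar>dY (f k (GG b)) (f k (g k b)) - c*dist (GG b) (g k b)\<bar> < e k"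
        using fdist[of "GG b" "g k b" k] GB G kk by simp
      have cd: "c*dist (GG b) (g k b) \<le> c*\<delta>'" using k(3) c0 by simp
      have t1: "dY (FF (GG b)) b \<le> dY (FF (GG b)) (f k (GG b)) + dY (f k (GG b)) (f k (g k b)) + dY (f k (g k b)) b"
        using Y.triangle FFY GB fY bY by (meson add_mono order_trans order_refl)
      have "dY (f k (g k b)) b = dY b (f k (g k b))" using Y.commute .
      then have "dY (FF (GG b)) b < (c+3) * \<delta>'" using t1 fd cd G kk(3) k(2) unfolding abs_less_iff
        by (simp add: algebra_simps)
      then show ?thesis using d'e by simp
    qed
    then have "dY (FF (GG b)) b = 0" by (rule zero_if_small)
    then show ?thesis using FFY GB bY by simp
  qed
  have GF_id: "GG (FF a) = a" if aZ: "a \<in> Z" for a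
  proof -
    define b where "b = FF a"
    have bY: "b \<in> Y" using FFY aZ by (simp add: b_def)
    have db: "dY q b = c * dist p a" using FFiso[OF pZ aZ] FFp by (simp add: b_def)
    have "\<bar>c * dist (GG b) a\<bar> < \<delta>" if d0: "\<delta> > 0" for \<delta>
    proof -
      define \<delta>' where "\<delta>' = \<delta> / (c+3)"
      have d'0: "\<delta>' > 0" and d'e: "(c+3) * \<delta>' = \<delta>" using d0 c0 by (auto simp: \<delta>'_def)
      obtain N where N: "\<forall>k\<ge>N. c * dist p a + 2 \<le> real k \<and> 1/(real k+1) < \<delta>'"
        using big_k[of "\<delta>'" "c * dist p a + 2", OF d'0] by auto
      obtain k where k: "k \<ge> N" "dY (FF a) (f k a) < \<delta>'" "dist (GG b) (g k b) < \<delta>'"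
        using approx[OF aZ aZ bY d'0, of N] by auto
      have Nk: "c * dist p a + 2 \<le> real k" "1/(real k+1) < \<delta>'" using N k(1) by auto
      have kk: "dY q b \<le> R k - e k" "c*dist p a \<le> R k" "e k < \<delta>'"
        using Nk Rk[of k] e0[of k] db unfolding e_def by linarith+
      note G = grange[OF bY kk(1)]
      have fd: "\<bar>dY (f k (g k b)) (f k a) - c*dist (g k b) a\<bar> < e k"
        using fdist[of "g k b" a k] aZ G kk by simp
      have t1: "dY (f k (g k b)) (f k a) \<le> dY b (f k (g k b)) + dY b (f k a)"
        using Y.triangle Y.commute fY bY by metis
      have t2: "dist (GG b) a \<le> dist (GG b) (g k b) + dist (g k b) a" by (rule dist_triangle)
      have cd: "c*dist (GG b) (g k b) \<le> c*\<delta>'" using k(3) c0 by simp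
      have "c * dist (GG b) a \<le> c*dist (GG b) (g k b) + c*dist (g k b) a"
        using t2 c0 by (metis distrib_left mult_left_mono less_imp_le)
      then have "c * dist (GG b) a < (c+3) * \<delta>'" using t1 fd cd G kk(3) k(2) unfolding abs_less_iff b_def
        by (simp add: algebra_simps)
      then show ?thesis using d'e c0 by simp
    qed
    then have "c * dist (GG b) a = 0" by (rule zero_if_small)
    then show ?thesis using c0 by (simp add: b_def)
  qed
  show ?thesis unfolding pointed_isometric_def
  proof (intro exI conjI)
    show "bij_betw FF Z Y"
      by (rule bij_betw_byWitness[where f'=GG]) (use GF_id FG_id FFY GGZ in auto)
    show "FF p = q" by (rule FFp)
    show "\<forall>a\<in>Z. \<forall>b\<in>Z. dY (FF a) (FF b) = c * dist a b" using FFiso by blast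
  qed
qed



lemma sim_bij:
  fixes w :: "'a::euclidean_space \<Rightarrow> 'a"
  assumes r0: "r > 0" and wd: "\<And>a b. dist (w a) (w b) = r * dist a b"
  shows "bij w"
proof -
  define u where "u z = (1/r) *\<^sub>R (w z - w 0)" for z
  have u0: "u 0 = 0" by (simp add: u_def)
  have ud: "\<forall>a b. dist (u a) (u b) = dist a b"
  proof (intro allI)
    fix a b
    have "u a - u b = (1/r) *\<^sub>R (w a - w b)" by (simp add: u_def algebra_simps)
    then have "dist (u a) (u b) = (1/r) * dist (w a) (w b)" using r0 by (simp add: dist_norm)
    then show "dist (u a) (u b) = dist a b" using wd[of a b] r0 by simp
  qed
  have "linear u" by (rule isometry_linear[OF u0 ud])
  moreover have "inj u" by (metis dist_eq_0_iff injI ud)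
  ultimately have su: "surj u" by (rule linear_inj_imp_surj)
  have "\<exists>z. y = w z" for y
  proof -
    obtain z where z: "u z = (1/r) *\<^sub>R (y - w 0)" using su by (metis surjD)
    then have "(1/r) *\<^sub>R (w z - w 0) = (1/r) *\<^sub>R (y - w 0)" by (simp add: u_def)
    then have "w z - w 0 = y - w 0" using r0 by simp
    then show ?thesis by auto
  qed
  then have "surj w" unfolding surj_def by blast
  moreover have "inj w" using wd r0 by (metis dist_eq_0_iff injI mult_eq_0_iff less_irrefl)
  ultimately show ?thesis by (simp add: bij_def)
qed

lemma scale_decomp:
  fixes r T :: real
  assumes r0: "0 < r" and r1: "r < 1" and T1: "1 \<le> T"
  shows "\<exists>n. 1 \<le> T * r^n \<and> T * r^n < 1/r \<and> (\<forall>N. (1/r)^N \<le> T \<longrightarrow> N \<le> n)"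
proof -
  have ir: "1 < 1/r" using r0 r1 by simp
  obtain m where "T < (1/r)^m" using real_arch_pow[OF ir] by blast
  moreover have "(1/r)^m \<le> (1/r)^(Suc m)" using ir by (intro power_increasing) auto
  ultimately have ex: "\<exists>n. T < (1/r)^(Suc n)" by (meson less_le_trans)
  define n where "n = (LEAST n. T < (1/r)^(Suc n))"
  have up: "T < (1/r)^(Suc n)" unfolding n_def by (rule LeastI_ex[OF ex])
  have low: "(1/r)^n \<le> T"
  proof (cases n)
    case 0 then show ?thesis using T1 by simp
  next
    case (Suc m)
    then have "\<not> T < (1/r)^(Suc m)" using not_less_Least[of m "\<lambda>n. T < (1/r)^(Suc n)"] n_def by auto
    then show ?thesis using Suc by simp
  qed
  have rn: "(1/r)^n * r^n = 1" using r0 by (simp add: power_mult_distrib[symmetric])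
  have "1 \<le> T * r^n" using mult_right_mono[OF low, of "r^n"] r0 rn by simp
  moreover have "T * r^n < 1/r"
  proof -
    have "T * r^n < (1/r)^(Suc n) * r^n" using mult_strict_right_mono[OF up, of "r^n"] r0 by simp
    also have "\<dots> = 1/r" using rn by simp
    finally show ?thesis .
  qed
  moreover have "N \<le> n" if "(1/r)^N \<le> T" for N
  proof (rule ccontr)
    assume "\<not> N \<le> n"
    then have "Suc n \<le> N" by simp
    then have "(1/r)^(Suc n) \<le> (1/r)^N" using ir by (intro power_increasing) auto
    then show False using up that by simp
  qed
  ultimately show ?thesis by blast
qed

locale frac =
  fixes w :: "'a::euclidean_space \<Rightarrow> 'a" and F :: "'a set" and x :: 'a and r :: real
  assumes r0: "0 < r" and r1: "r < 1" and wd: "\<And>a b. dist (w a) (w b) = r * dist a b"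
    and wx: "w x = x" and wF: "w ` F \<subseteq> F" and Fc: "compact F" and Fne: "F \<noteq> {}"
begin

definition Zn :: "nat \<Rightarrow> 'a set" where "Zn n = (w ^^ n) -` F"
definition Z :: "'a set" where "Z = closure (\<Union>n. Zn n)"

lemma wn_dist: "dist ((w^^n) a) ((w^^n) b) = r^n * dist a b"
  by (induction n) (simp_all add: wd)

lemma wn_x: "(w^^n) x = x"
  by (induction n) (simp_all add: wx)

lemma wn_bij: "bij (w^^n)"
  by (rule sim_bij[of "r^n"]) (simp_all add: r0 wn_dist)

lemma wnF: "(w^^n) a \<in> F" if "a \<in> F"
  using that proof (induction n)
  case (Suc n) then show ?case using wF by (simp add: image_subset_iff)
qed simp

lemma xF: "x \<in> F"
proof -
  obtain a where a: "a \<in> F" using Fne by blast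
  have "(\<lambda>n. dist ((w^^n) a) x) \<longlonglongrightarrow> 0"
  proof -
    have "(\<lambda>n. r^n * dist a x) \<longlonglongrightarrow> 0 * dist a x"
      by (rule tendsto_mult_right[OF LIMSEQ_power_zero]) (use r0 r1 in simp)
    moreover have "dist ((w^^n) a) x = r^n * dist a x" for n
      using wn_dist[of n a x] wn_x[of n] by simp
    ultimately show ?thesis by simp
  qed
  then have "(\<lambda>n. (w^^n) a) \<longlonglongrightarrow> x" by (rule tendsto_dist_iff[THEN iffD2])
  then show ?thesis
    by (rule closed_sequentially[OF compact_imp_closed[OF Fc], rotated]) (rule wnF[OF a])
qed

lemma Zn_mono: "Zn m \<subseteq> Zn n" if "m \<le> n"
proof
  fix a assume "a \<in> Zn m"
  then have "(w^^m) a \<in> F" by (simp add: Zn_def)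
  then have "(w^^(n-m)) ((w^^m) a) \<in> F" by (rule wnF)
  moreover have "(w^^(n-m)) ((w^^m) a) = (w^^n) a"
  proof -
    have "(w^^(n-m)) ((w^^m) a) = (w^^(n-m+m)) a" by (simp add: funpow_add)
    then show ?thesis using that by simp
  qed
  ultimately show "a \<in> Zn n" by (simp add: Zn_def)
qed

lemma x_Zn: "x \<in> Zn n" by (simp add: Zn_def wn_x xF)

lemma Zn_Z: "Zn n \<subseteq> Z"
proof -
  have "Zn n \<subseteq> (\<Union>m. Zn m)" by (rule UN_upper) simp
  then show ?thesis unfolding Z_def by (rule order_trans[OF _ closure_subset])
qed

lemma x_Z: "x \<in> Z" using Zn_Z[of 0] x_Zn[of 0] by (rule subsetD)

lemma Z_closed: "closed Z" by (simp add: Z_def)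

lemma approxZ:
  assumes d0: "\<delta> > 0"
  shows "\<exists>N. \<forall>n\<ge>N. \<forall>z\<in>Z. dist x z \<le> \<rho> \<longrightarrow> (\<exists>a\<in>Zn n. dist x a \<le> \<rho> + \<delta> \<and> dist z a < \<delta>)"
proof -
  define K where "K = Z \<inter> cball x \<rho>"
  have cK: "compact K" unfolding K_def by (simp add: Z_closed closed_Int_compact)
  have pt: "\<exists>m a. a \<in> Zn m \<and> dist z a < \<delta>/2" if "z \<in> K" for z
  proof -
    have "z \<in> closure (\<Union>n. Zn n)" using that by (simp add: K_def Z_def)
    moreover have "\<delta>/2 > 0" using d0 by simp
    ultimately have "\<exists>a\<in>(\<Union>n. Zn n). dist z a < \<delta>/2" by (rule closure_approachableD)
    then obtain a where "a \<in> (\<Union>n. Zn n)" "dist z a < \<delta>/2" by (elim bexE)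
    then show ?thesis by blast
  qed
  then obtain m A where mA: "\<And>z. z \<in> K \<Longrightarrow> A z \<in> Zn (m z) \<and> dist z (A z) < \<delta>/2" by metis
  have "K \<subseteq> (\<Union>z\<in>K. ball z (\<delta>/2))" using d0 by auto
  then obtain C where C: "C \<subseteq> K" "finite C" "K \<subseteq> (\<Union>z\<in>C. ball z (\<delta>/2))"
    using compactE_image[OF cK, of K "\<lambda>z. ball z (\<delta>/2)"] by blast
  define N where "N = Max (insert 0 (m ` C))"
  have mN: "m z \<le> N" if "z \<in> C" for z using C(2) that by (simp add: N_def)
  show ?thesis
  proof (intro exI[of _ N] allI impI ballI)
    fix n z assume n: "N \<le> n" and z: "z \<in> Z" and zr: "dist x z \<le> \<rho>"
    then have "z \<in> K" by (simp add: K_def)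
    then obtain z0 where z0: "z0 \<in> C" "dist z0 z < \<delta>/2" using C(3) by auto
    have A0: "A z0 \<in> Zn (m z0)" "dist z0 (A z0) < \<delta>/2" using mA C(1) z0(1) by auto
    have "A z0 \<in> Zn n" using A0(1) Zn_mono[of "m z0" n] mN[OF z0(1)] n by auto
    moreover have "dist z (A z0) < \<delta>" using dist_triangle[of z "A z0" z0] A0(2) z0(2)
      by (simp add: dist_commute)
    moreover have "dist x (A z0) \<le> \<rho> + \<delta>" using dist_triangle[of x "A z0" z] zr \<open>dist z (A z0) < \<delta>\<close>
      by simp
    ultimately show "\<exists>a\<in>Zn n. dist x a \<le> \<rho> + \<delta> \<and> dist z a < \<delta>" by blast
  qed
qed

lemma wi_facts:
  defines "wi \<equiv> \<lambda>k. inv (w^^k)"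
  shows "(w^^k) (wi k a) = a" "wi k ((w^^k) a) = a" "wi k x = x"
    "a \<in> F \<Longrightarrow> wi k a \<in> Zn k" "dist a b = r^k * dist (wi k a) (wi k b)"
proof -
  show 1: "(w^^k) (wi k a) = a" for a using wn_bij[of k] by (simp add: wi_def bij_is_surj surj_f_inv_f)
  show 2: "wi k ((w^^k) a) = a" for a using wn_bij[of k] by (simp add: wi_def bij_is_inj inv_f_f)
  show "wi k x = x" using 2[of x] wn_x[of k] by simp
  show "a \<in> F \<Longrightarrow> wi k a \<in> Zn k" using 1[of a] by (simp add: Zn_def)
  show "dist a b = r^k * dist (wi k a) (wi k b)" using wn_dist[of k "wi k a" "wi k b"] 1 by simp
qed

lemma tlim_pow:
  assumes c0: "c > 0"
  shows "filterlim (\<lambda>k. c * (1/r)^k) at_top sequentially"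
  unfolding filterlim_at_top
proof (intro allI)
  fix Z0 :: real
  have ir: "1 < 1/r" using r0 r1 by simp
  obtain n where n: "Z0/c < (1/r)^n" using real_arch_pow[OF ir] by blast
  have "Z0 \<le> c * (1/r)^k" if "n \<le> k" for k
  proof -
    have "(1/r)^n \<le> (1/r)^k" using ir that by (intro power_increasing) auto
    then have "Z0/c \<le> (1/r)^k" using n by linarith
    then show ?thesis using c0 by (simp add: pos_divide_le_eq mult.commute)
  qed
  then show "\<forall>\<^sub>F k in sequentially. Z0 \<le> c * (1/r)^k" unfolding eventually_sequentially by auto
qed

lemma tangent_of_iso:
  assumes c0: "c > 0" and iso: "pointed_isometric Z (\<lambda>a b. c*dist a b) x Y dY y"
  shows "tangent_set F dist x Y dY y"
proof -
  obtain g where g1: "bij_betw g Z Y" and g2: "g x = y" and g3: "\<forall>a\<in>Z. \<forall>b\<in>Z. dY (g a) (g b) = c*dist a b"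
    using iso unfolding pointed_isometric_def by (elim exE conjE)
  define t :: "nat \<Rightarrow> real" where "t k = c * (1/r)^k" for k
  define wi where "wi k = inv (w^^k)" for k
  have wf1: "(w^^k) (wi k a) = a" for k a unfolding wi_def by (rule wi_facts(1))
  have wf2: "wi k ((w^^k) a) = a" for k a unfolding wi_def by (rule wi_facts(2))
  have wf3: "wi k x = x" for k unfolding wi_def by (rule wi_facts(3))
  have wf4: "a \<in> F \<Longrightarrow> wi k a \<in> Zn k" for k a unfolding wi_def by (rule wi_facts(4))
  have wf5: "dist a b = r^k * dist (wi k a) (wi k b)" for k a b unfolding wi_def by (rule wi_facts(5))
  have tr: "t k * r^k = c" for k using r0 by (simp add: t_def power_one_over field_simps)
  have tpos: "\<forall>k. t k > 0" using c0 r0 by (simp add: t_def)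
  have tlim: "filterlim t at_top sequentially" unfolding t_def by (rule tlim_pow[OF c0])
  have gY: "g a \<in> Y" if "a \<in> Z" for a using bij_betw_apply[OF g1 that] .
  have "pGH_conv (\<lambda>k. F) (\<lambda>k a b. t k * dist a b) (\<lambda>k. x) Y dY y"
    unfolding pGH_conv_def
  proof (intro allI impI)
    fix R \<epsilon> :: real assume R0: "R > 0" and e0: "\<epsilon> > 0"
    obtain N where N: "\<forall>n\<ge>N. \<forall>z\<in>Z. dist x z \<le> (R-\<epsilon>)/c \<longrightarrow> (\<exists>a\<in>Zn n. dist x a \<le> (R-\<epsilon>)/c + \<epsilon>/c \<and> dist z a < \<epsilon>/c)"
      using approxZ[of "\<epsilon>/c" "(R-\<epsilon>)/c"] e0 c0 by auto
    show "\<exists>n0. \<forall>n\<ge>n0. \<exists>f. f ` cball_in F (\<lambda>a b. t n * dist a b) x R \<subseteq> Y \<and> f x = y \<and>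
        (\<forall>a\<in>cball_in F (\<lambda>a b. t n * dist a b) x R. \<forall>b\<in>cball_in F (\<lambda>a b. t n * dist a b) x R.
            \<bar>dY (f a) (f b) - t n * dist a b\<bar> < \<epsilon>) \<and>
        (\<forall>q\<in>cball_in Y dY y (R - \<epsilon>). \<exists>a\<in>cball_in F (\<lambda>a b. t n * dist a b) x R. dY q (f a) < \<epsilon>)"
    proof (intro exI[of _ N] allI impI)
      fix k assume k: "N \<le> k"
      define f where "f a = g (wi k a)" for a
      have wiZ: "wi k a \<in> Z" if "a \<in> F" for a using wf4[OF that] Zn_Z by (rule subsetD[rotated])
      show "\<exists>f. f ` cball_in F (\<lambda>a b. t k * dist a b) x R \<subseteq> Y \<and> f x = y \<and>
        (\<forall>a\<in>cball_in F (\<lambda>a b. t k * dist a b) x R. \<forall>b\<in>cball_in F (\<lambda>a b. t k * dist a b) x R.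
            \<bar>dY (f a) (f b) - t k * dist a b\<bar> < \<epsilon>) \<and>
        (\<forall>q\<in>cball_in Y dY y (R - \<epsilon>). \<exists>a\<in>cball_in F (\<lambda>a b. t k * dist a b) x R. dY q (f a) < \<epsilon>)"
      proof (intro exI[of _ f] conjI)
        show "f ` cball_in F (\<lambda>a b. t k * dist a b) x R \<subseteq> Y"
          unfolding cball_in_def f_def using wiZ gY by auto
        show "f x = y" by (simp add: f_def wf3 g2)
        show "\<forall>a\<in>cball_in F (\<lambda>a b. t k * dist a b) x R. \<forall>b\<in>cball_in F (\<lambda>a b. t k * dist a b) x R.
            \<bar>dY (f a) (f b) - t k * dist a b\<bar> < \<epsilon>"
        proof (intro ballI)
          fix a b assume "a \<in> cball_in F (\<lambda>a b. t k * dist a b) x R" "b \<in> cball_in F (\<lambda>a b. t k * dist a b) x R"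
          then have ab: "a \<in> F" "b \<in> F" by (simp_all add: cball_in_def)
          have "dY (f a) (f b) = c * dist (wi k a) (wi k b)" using g3 wiZ ab by (simp add: f_def)
          moreover have "t k * dist a b = c * dist (wi k a) (wi k b)"
            using wf5[of a b k] tr[of k] by (simp add: mult.assoc[symmetric])
          ultimately show "\<bar>dY (f a) (f b) - t k * dist a b\<bar> < \<epsilon>" using e0 by simp
        qed
        show "\<forall>q\<in>cball_in Y dY y (R - \<epsilon>). \<exists>a\<in>cball_in F (\<lambda>a b. t k * dist a b) x R. dY q (f a) < \<epsilon>"
        proof (intro ballI)
          fix q assume "q \<in> cball_in Y dY y (R - \<epsilon>)"
          then have q: "q \<in> Y" "dY y q \<le> R - \<epsilon>" by (simp_all add: cball_in_def)
          have "q \<in> g ` Z" using g1 q(1) by (simp add: bij_betw_def)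
          then obtain z where z: "z \<in> Z" "q = g z" by (elim imageE)
          have "c * dist x z = dY y q" using g3 z(1) x_Z unfolding z(2) g2[symmetric] by simp
          then have "dist x z \<le> (R-\<epsilon>)/c" using q(2) c0 by (simp add: pos_le_divide_eq mult.commute)
          then obtain a where a: "a \<in> Zn k" "dist x a \<le> (R-\<epsilon>)/c + \<epsilon>/c" "dist z a < \<epsilon>/c"
            using N k z(1) by blast
          define u where "u = (w^^k) a"
          have uF: "u \<in> F" using a(1) by (simp add: Zn_def u_def)
          have wiu: "wi k u = a" by (simp add: u_def wf2)
          have aZ: "a \<in> Z" using a(1) Zn_Z by (rule subsetD[rotated])
          have "t k * dist x u = c * dist x a"
            using wn_dist[of k x a] wn_x[of k] tr[of k] by (simp add: u_def mult.assoc[symmetric])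
          also have "\<dots> \<le> c * ((R-\<epsilon>)/c + \<epsilon>/c)" using a(2) c0 by simp
          also have "\<dots> = R" using c0 by (simp add: field_simps)
          finally have "u \<in> cball_in F (\<lambda>a b. t k * dist a b) x R" using uF by (simp add: cball_in_def)
          moreover have "dY q (f u) < \<epsilon>"
          proof -
            have "dY q (f u) = c * dist z a" using g3 z aZ by (simp add: f_def wiu)
            also have "\<dots> < \<epsilon>" using a(3) c0 by (simp add: pos_less_divide_eq mult.commute)
            finally show ?thesis .
          qed
          ultimately show "\<exists>a\<in>cball_in F (\<lambda>a b. t k * dist a b) x R. dY q (f a) < \<epsilon>" by (intro bexI)
        qed
      qed
    qed
  qed
  then show ?thesis unfolding tangent_set_def using tpos tlim by (intro exI[of _ t]) simp
qed

lemma dist_dist_le: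
  fixes a b a' b' :: "'b::metric_space"
  shows "\<bar>dist a b - dist a' b'\<bar> \<le> dist a a' + dist b b'"
proof -
  have "dist a b \<le> dist a a' + dist a' b" by (rule dist_triangle)
  moreover have "dist a' b \<le> dist a' b' + dist b' b" by (rule dist_triangle)
  moreover have "dist a' b' \<le> dist a' a + dist a b'" by (rule dist_triangle)
  moreover have "dist a b' \<le> dist a b + dist b b'" by (rule dist_triangle)
  moreover have "dist a' a = dist a a'" "dist b' b = dist b b'" by (simp_all add: dist_commute)
  ultimately show ?thesis unfolding abs_le_iff by linarith
qed

lemma iso_of_tangent:
  assumes PY: "proper_metric Y dY" and yY: "y \<in> Y" and tan: "tangent_set F dist x Y dY y"
  shows "\<exists>c>0. pointed_isometric Z (\<lambda>a b. c*dist a b) x Y dY y"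
proof -
  interpret Y: Metric_space Y dY using PY by (simp add: proper_metric_def)
  obtain t where tpos: "\<forall>k. t k > 0" and tlim: "filterlim t at_top sequentially"
    and conv: "pGH_conv (\<lambda>k. F) (\<lambda>k a b. t k * dist a b) (\<lambda>k. x) Y dY y"
    using tan unfolding tangent_set_def by (elim exE conjE)
  have ev: "\<exists>M. \<forall>k\<ge>M. B \<le> t k" for B
    using tlim unfolding filterlim_at_top eventually_sequentially by simp
  define P where "P T n \<longleftrightarrow> 1 \<le> T * r^n \<and> T * r^n < 1/r \<and> (\<forall>N. (1/r)^N \<le> T \<longrightarrow> N \<le> n)" for T n
  define nk where "nk k = (SOME n. P (t k) n)" for k
  have nkP: "P (t k) (nk k)" if "1 \<le> t k" for k
  proof -
    have "\<exists>n. P (t k) n" unfolding P_def by (rule scale_decomp[OF r0 r1 that])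
    then show ?thesis unfolding nk_def by (rule someI_ex)
  qed
  have ir: "1 < 1/r" using r0 r1 by simp
  define sk where "sk k = max 1 (min (1/r) (t k * r^(nk k)))" for k
  have skI: "sk k \<in> {1..1/r}" for k using ir by (simp add: sk_def)
  have "seq_compact {1..1/r::real}" by (rule compact_imp_seq_compact[OF compact_Icc])
  then obtain c \<sigma> where c: "c \<in> {1..1/r}" and \<sigma>: "strict_mono \<sigma>" and lim: "(sk \<circ> \<sigma>) \<longlonglongrightarrow> c"
    unfolding seq_compact_def using skI by meson
  have c1: "1 \<le> c" and c0: "c > 0" using c by auto
  have "pointed_isometric Z (\<lambda>a b. c*dist a b) x Y dY y"
  proof (rule uniq[OF Z_closed x_Z c0 PY yY])
    fix R \<epsilon> :: real assume R0: "R > 0" and e0: "\<epsilon> > 0"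
    define \<epsilon>' where "\<epsilon>' = \<epsilon>/8"
    define \<delta> where "\<delta> = min 1 (min (\<epsilon>/(8*c)) (\<epsilon>*r/4))"
    define \<eta> where "\<eta> = \<epsilon>/(8*(R+1))"
    define R' where "R' = R + (R/c + 1)/r"
    have e'0: "\<epsilon>' > 0" using e0 by (simp add: \<epsilon>'_def)
    have d0: "\<delta> > 0" using e0 c0 r0 by (simp add: \<delta>_def)
    have d1: "\<delta> \<le> 1" "c * \<delta> \<le> \<epsilon>/8" "\<delta> / r \<le> \<epsilon>/4"
    proof -
      show "\<delta> \<le> 1" by (simp add: \<delta>_def)
      have "\<delta> \<le> \<epsilon>/(8*c)" by (simp add: \<delta>_def)
      then show "c * \<delta> \<le> \<epsilon>/8" using c0 by (simp add: field_simps)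
      have "\<delta> \<le> \<epsilon>*r/4" by (simp add: \<delta>_def)
      then show "\<delta> / r \<le> \<epsilon>/4" using r0 by (simp add: field_simps)
    qed
    have eta0: "\<eta> > 0" using e0 R0 by (simp add: \<eta>_def)
    have etaR: "\<eta> * (2*(R+1)) = \<epsilon>/4" "\<eta> * R \<le> \<epsilon>/8"
    proof -
      show "\<eta> * (2*(R+1)) = \<epsilon>/4" using R0 by (simp add: \<eta>_def field_simps)
      have "\<eta> * R \<le> \<eta> * (R+1)" using eta0 by simp
      also have "\<dots> = \<epsilon>/8" using R0 by (simp add: \<eta>_def field_simps)
      finally show "\<eta> * R \<le> \<epsilon>/8" .
    qed
    have Rc: "R/c \<le> R" using R0 c1 by (simp add: divide_le_eq_1 field_simps)
    have R'0: "R' > 0" using R0 c0 r0 by (simp add: R'_def add_pos_pos)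
    have R'b: "(R/c + 1)/r \<le> R'" "R - \<epsilon> \<le> R' - \<epsilon>'"
    proof -
      have "(R/c + 1)/r > 0" using R0 c0 r0 by (intro divide_pos_pos add_pos_pos) simp_all
      then show "(R/c + 1)/r \<le> R'" "R - \<epsilon> \<le> R' - \<epsilon>'" using R0 e0 by (simp_all add: R'_def \<epsilon>'_def)
    qed
    obtain n0 where n0: "\<forall>k\<ge>n0. \<exists>f. f ` cball_in F (\<lambda>a b. t k * dist a b) x R' \<subseteq> Y \<and> f x = y \<and>
        (\<forall>a\<in>cball_in F (\<lambda>a b. t k * dist a b) x R'. \<forall>b\<in>cball_in F (\<lambda>a b. t k * dist a b) x R'.
            \<bar>dY (f a) (f b) - t k * dist a b\<bar> < \<epsilon>') \<and>
        (\<forall>q\<in>cball_in Y dY y (R' - \<epsilon>'). \<exists>a\<in>cball_in F (\<lambda>a b. t k * dist a b) x R'. dY q (f a) < \<epsilon>')"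
      using conv[unfolded pGH_conv_def, rule_format, OF R'0 e'0] by (elim exE)
    obtain N1 where N1: "\<forall>n\<ge>N1. \<forall>z\<in>Z. dist x z \<le> R/c \<longrightarrow> (\<exists>a\<in>Zn n. dist x a \<le> R/c + \<delta> \<and> dist z a < \<delta>)"
      using approxZ[OF d0, of "R/c"] by (elim exE)
    obtain M where M: "\<forall>k\<ge>M. max 1 ((1/r)^N1) \<le> t k" using ev[of "max 1 ((1/r)^N1)"] by (elim exE)
    obtain J where J: "\<forall>j\<ge>J. dist ((sk \<circ> \<sigma>) j) c < \<eta>"
      using lim[unfolded LIMSEQ_def, rule_format, OF eta0] by (elim exE)
    define j where "j = max J (max n0 M)"
    define k where "k = \<sigma> j"
    have kj: "j \<le> k" unfolding k_def by (rule seq_suble[OF \<sigma>])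
    have kn0: "n0 \<le> k" and kM: "M \<le> k" using kj by (simp_all add: j_def)
    have tk1: "1 \<le> t k" and tkN: "(1/r)^N1 \<le> t k" using M kM by auto
    define n where "n = nk k"
    define s where "s = t k * r^n"
    have Pk: "P (t k) n" unfolding n_def by (rule nkP[OF tk1])
    have s1: "1 \<le> s" and sr: "s < 1/r" and nN1: "N1 \<le> n" using Pk tkN by (auto simp: P_def s_def)
    have sks: "sk k = s" using s1 sr by (simp add: sk_def s_def n_def)
    have sc: "\<bar>s - c\<bar> < \<eta>" using J[rule_format, of j] sks by (simp add: j_def k_def dist_real_def)
    obtain fk where fk1: "fk ` cball_in F (\<lambda>a b. t k * dist a b) x R' \<subseteq> Y" and fk2: "fk x = y"
      and fk3: "\<forall>a\<in>cball_in F (\<lambda>a b. t k * dist a b) x R'. \<forall>b\<in>cball_in F (\<lambda>a b. t k * dist a b) x R'.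
            \<bar>dY (fk a) (fk b) - t k * dist a b\<bar> < \<epsilon>'"
      and fk4: "\<forall>q\<in>cball_in Y dY y (R' - \<epsilon>'). \<exists>a\<in>cball_in F (\<lambda>a b. t k * dist a b) x R'. dY q (fk a) < \<epsilon>'"
      using n0[rule_format, OF kn0] by (elim exE conjE)
    define B where "B = cball_in F (\<lambda>a b. t k * dist a b) x R'"
    have inB: "u \<in> B \<longleftrightarrow> u \<in> F \<and> t k * dist x u \<le> R'" for u by (simp add: B_def cball_in_def)
    have tkd: "t k * dist ((w^^n) a) ((w^^n) b) = s * dist a b" for a b
      using wn_dist[of n a b] by (simp add: s_def)
    have tkx: "t k * dist x ((w^^n) a) = s * dist x a" for a using tkd[of x a] wn_x[of n] by simp
    have Aex: "\<exists>a. a \<in> Zn n \<and> dist x a \<le> R/c + \<delta> \<and> dist z a < \<delta>" if "z \<in> Z" "c * dist x z \<le> R" for z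
    proof -
      have "dist x z \<le> R/c" using that(2) c0 by (simp add: pos_le_divide_eq mult.commute)
      then have "\<exists>a\<in>Zn n. dist x a \<le> R/c + \<delta> \<and> dist z a < \<delta>" using N1 nN1 that(1) by simp
      then show ?thesis by (elim bexE conjE) (intro exI conjI)
    qed
    define A where "A z = (if z = x then x else SOME a. a \<in> Zn n \<and> dist x a \<le> R/c + \<delta> \<and> dist z a < \<delta>)" for z
    have A: "A z \<in> Zn n \<and> dist x (A z) \<le> R/c + \<delta> \<and> dist z (A z) < \<delta>" if "z \<in> Z" "c * dist x z \<le> R" for z
    proof (cases "z = x")
      case True then show ?thesis using x_Zn d0 R0 c0 by (simp add: A_def)
    next
      case False then show ?thesis using someI_ex[OF Aex[OF that]] by (simp add: A_def)
    qed
    define f where "f z = fk ((w^^n) (A z))" for z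
    have uB: "(w^^n) (A z) \<in> B" if "z \<in> Z" "c * dist x z \<le> R" for z
    proof -
      note Az = A[OF that]
      have "(w^^n) (A z) \<in> F" using Az by (simp add: Zn_def)
      moreover have "t k * dist x ((w^^n) (A z)) \<le> R'"
      proof -
        have "t k * dist x ((w^^n) (A z)) = s * dist x (A z)" by (rule tkx)
        also have "\<dots> \<le> (1/r) * (R/c + 1)"
          using Az d1(1) s1 sr r0 by (intro mult_mono) auto
        also have "\<dots> \<le> R'" using R'b(1) by simp
        finally show ?thesis .
      qed
      ultimately show ?thesis by (simp add: inB)
    qed
    have xB: "x \<in> B" using xF R'0 by (simp add: inB)
    have fkY: "fk u \<in> Y" if "u \<in> B" for u using fk1 that by (auto simp: B_def)
    show "\<exists>f. (\<forall>a\<in>Z. c*dist x a \<le> R \<longrightarrow> f a \<in> Y) \<and> f x = y \<and>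
     (\<forall>a\<in>Z. \<forall>b\<in>Z. c*dist x a \<le> R \<longrightarrow> c*dist x b \<le> R \<longrightarrow> \<bar>dY (f a) (f b) - c*dist a b\<bar> < \<epsilon>) \<and>
     (\<forall>b\<in>Y. dY y b \<le> R - \<epsilon> \<longrightarrow> (\<exists>a\<in>Z. c*dist x a \<le> R \<and> dY b (f a) < \<epsilon>))"
    proof (intro exI[of _ f] conjI ballI impI)
      fix a assume "a \<in> Z" "c * dist x a \<le> R"
      then show "f a \<in> Y" unfolding f_def by (intro fkY uB)
    next
      show "f x = y" using wn_x fk2 by (simp add: f_def A_def)
    next
      fix z1 z2 assume z1: "z1 \<in> Z" "c * dist x z1 \<le> R" and z2: "z2 \<in> Z" "c * dist x z2 \<le> R"
      note A1 = A[OF z1] and A2 = A[OF z2]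
      define dA where "dA = dist (A z1) (A z2)"
      define dz where "dz = dist z1 z2"
      have h0: "\<bar>dY (f z1) (f z2) - s * dA\<bar> < \<epsilon>'"
        using fk3[rule_format, OF uB[OF z1, unfolded B_def] uB[OF z2, unfolded B_def]] tkd[of "A z1" "A z2"]
        by (simp add: f_def dA_def)
      have h2: "dA \<le> 2*(R+1)"
      proof -
        have "dA \<le> dist (A z1) x + dist x (A z2)" unfolding dA_def by (rule dist_triangle)
        also have "\<dots> \<le> (R/c + \<delta>) + (R/c + \<delta>)" using A1 A2 by (simp add: dist_commute)
        also have "\<dots> \<le> 2*(R+1)" using Rc d1(1) by simp
        finally show ?thesis .
      qed
      have h3: "\<bar>dA - dz\<bar> \<le> 2*\<delta>"
      proof -
        have "\<bar>dA - dz\<bar> \<le> dist (A z1) z1 + dist (A z2) z2" unfolding dA_def dz_def by (rule dist_dist_le)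
        then show ?thesis using A1 A2 by (simp add: dist_commute)
      qed
      have "s * dA - c * dz = (s - c) * dA + c * (dA - dz)" by (simp add: algebra_simps)
      moreover have "\<bar>(s - c) * dA + c * (dA - dz)\<bar> \<le> \<bar>(s - c) * dA\<bar> + \<bar>c * (dA - dz)\<bar>"
        by (rule abs_triangle_ineq)
      moreover have "\<bar>(s - c) * dA\<bar> = \<bar>s - c\<bar> * dA" by (simp add: abs_mult dA_def)
      moreover have "\<bar>c * (dA - dz)\<bar> = c * \<bar>dA - dz\<bar>" using c0 by (simp add: abs_mult)
      ultimately have "\<bar>s * dA - c * dz\<bar> \<le> \<bar>s - c\<bar> * dA + c * \<bar>dA - dz\<bar>" by simp
      also have "\<dots> \<le> \<eta> * (2*(R+1)) + c * (2*\<delta>)"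
      proof (rule add_mono)
        show "\<bar>s - c\<bar> * dA \<le> \<eta> * (2*(R+1))" using sc h2 eta0 by (intro mult_mono) (auto simp: dA_def)
        show "c * \<bar>dA - dz\<bar> \<le> c * (2*\<delta>)" using h3 c0 by simp
      qed
      finally have "\<bar>s * dA - c * dz\<bar> \<le> \<epsilon>/4 + \<epsilon>/4" using etaR(1) d1(2) by simp
      then show "\<bar>dY (f z1) (f z2) - c * dist z1 z2\<bar> < \<epsilon>" using h0 unfolding \<epsilon>'_def dz_def abs_less_iff abs_le_iff
        by linarith
    next
      fix b assume bY: "b \<in> Y" and bR: "dY y b \<le> R - \<epsilon>"
      then have "b \<in> cball_in Y dY y (R' - \<epsilon>')" using R'b(2) by (simp add: cball_in_def)
      then obtain u where uB': "u \<in> B" and bu: "dY b (fk u) < \<epsilon>'" using fk4 by (auto simp: B_def)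
      have uF: "u \<in> F" using uB' by (simp add: inB)
      have "\<bar>dY (fk x) (fk u) - t k * dist x u\<bar> < \<epsilon>'"
        using fk3[rule_format, OF xB[unfolded B_def] uB'[unfolded B_def]] .
      then have "\<bar>dY y (fk u) - t k * dist x u\<bar> < \<epsilon>'" by (simp only: fk2)
      moreover have "dY y (fk u) \<le> dY y b + dY b (fk u)" using Y.triangle[OF yY bY fkY[OF uB']] .
      ultimately have tu: "t k * dist x u < R - \<epsilon> + 2*\<epsilon>'" using bR bu unfolding abs_less_iff by linarith
      define wi where "wi m = inv (w^^m)" for m
      have wf1: "(w^^m) (wi m a) = a" for m a unfolding wi_def by (rule wi_facts(1))
      have wf4: "a \<in> F \<Longrightarrow> wi m a \<in> Zn m" for m a unfolding wi_def by (rule wi_facts(4))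
      define z0 where "z0 = wi n u"
      have z0Z: "z0 \<in> Z" using wf4[OF uF] Zn_Z unfolding z0_def by (rule subsetD[rotated])
      have uz0: "u = (w^^n) z0" by (simp add: z0_def wf1)
      define d0 where "d0 = dist x z0"
      have sd0: "s * d0 < R - \<epsilon> + 2*\<epsilon>'" using tu tkx[of z0] uz0 by (simp add: d0_def)
      have d0ge: "d0 \<ge> 0" by (simp add: d0_def)
      have "d0 \<le> s * d0" using s1 d0ge by (simp add: mult_le_cancel_right1)
      then have d0R: "d0 \<le> R" using sd0 e0 by (simp add: \<epsilon>'_def)
      have "c * d0 \<le> s * d0 + \<bar>s - c\<bar> * d0"
      proof -
        have "(c - s) * d0 \<le> \<bar>s - c\<bar> * d0" using d0ge by (intro mult_right_mono) auto
        then show ?thesis by (simp add: algebra_simps)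
      qed
      also have "\<bar>s - c\<bar> * d0 \<le> \<eta> * R" using sc d0R d0ge eta0 by (intro mult_mono) auto
      then have "s * d0 + \<bar>s - c\<bar> * d0 \<le> s * d0 + \<eta> * R" by simp
      finally have cz0: "c * dist x z0 \<le> R" using sd0 etaR(2) e0 unfolding d0_def \<epsilon>'_def by linarith
      note Az0 = A[OF z0Z cz0]
      define u' where "u' = (w^^n) (A z0)"
      have u'B: "u' \<in> B" unfolding u'_def by (rule uB[OF z0Z cz0])
      have "t k * dist u u' = s * dist z0 (A z0)" by (simp add: uz0 u'_def tkd)
      also have "\<dots> \<le> (1/r) * \<delta>" using s1 sr Az0 r0 by (intro mult_mono) auto
      also have "\<dots> \<le> \<epsilon>/4" using d1(3) by simp
      finally have tuu: "t k * dist u u' \<le> \<epsilon>/4" .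
      have "\<bar>dY (fk u) (fk u') - t k * dist u u'\<bar> < \<epsilon>'"
        using fk3[rule_format, OF uB'[unfolded B_def] u'B[unfolded B_def]] .
      moreover have "dY b (fk u') \<le> dY b (fk u) + dY (fk u) (fk u')" using Y.triangle[OF bY fkY[OF uB'] fkY[OF u'B]] .
      ultimately have "dY b (fk u') < \<epsilon>" using bu tuu e0 unfolding abs_less_iff \<epsilon>'_def by linarith
      then have "dY b (f z0) < \<epsilon>" by (simp add: f_def u'_def)
      then show "\<exists>a\<in>Z. c * dist x a \<le> R \<and> dY b (f a) < \<epsilon>" using z0Z cz0 by blast
    qed
  qed
  then show ?thesis using c0 by blast
qed

end

theorem theorem2p6:
  fixes W :: "('a::euclidean_space \<Rightarrow> 'a) set"
    and F :: "'a set" and w :: "'a \<Rightarrow> 'a" and x :: 'a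
    and Y :: "'b set" and dY :: "'b \<Rightarrow> 'b \<Rightarrow> real" and y :: 'b
  assumes "finite W" and "W \<noteq> {}"
    and "\<forall>v\<in>W. contracting_similarity v"
    and "F \<noteq> {}" and "compact F" and "F = (\<Union>v\<in>W. v ` F)"
    and "w \<in> W" and "w x = x"
    and "proper_metric Y dY" and "y \<in> Y"
  shows "tangent_set F dist x Y dY y \<longleftrightarrow>
         (\<exists>c>0. pointed_isometric
                  (closure (\<Union>n::nat. (w ^^ n) -` F)) (\<lambda>a b. c * dist a b) x Y dY y)"
proof -
  have "contracting_similarity w" using assms(3) assms(7) by simp
  then obtain r where r0: "0 < r" and r1: "r < 1" and wd: "\<forall>a b. dist (w a) (w b) = r * dist a b"
    unfolding contracting_similarity_def by (elim exE conjE)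
  have wF: "w ` F \<subseteq> F"
  proof -
    have "w ` F \<subseteq> (\<Union>v\<in>W. v ` F)" using assms(7) by (rule UN_upper)
    then show ?thesis using assms(6) by simp
  qed
  interpret fr: frac w F x r
    by (unfold_locales) (use r0 r1 wd assms(8) wF assms(5) assms(4) in simp_all)
  have ZZ: "closure (\<Union>n::nat. (w ^^ n) -` F) = fr.Z" by (simp add: fr.Z_def fr.Zn_def)
  show ?thesis unfolding ZZ
  proof
    assume "tangent_set F dist x Y dY y"
    then show "\<exists>c>0. pointed_isometric fr.Z (\<lambda>a b. c * dist a b) x Y dY y"
      by (rule fr.iso_of_tangent[OF assms(9) assms(10)])
  next
    assume "\<exists>c>0. pointed_isometric fr.Z (\<lambda>a b. c * dist a b) x Y dY y"
    then obtain c where "c > 0" "pointed_isometric fr.Z (\<lambda>a b. c * dist a b) x Y dY y" by (elim exE conjE)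
    then show "tangent_set F dist x Y dY y" by (rule fr.tangent_of_iso)
  qed
qed

end
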